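(* Let $n\geq 2$ and let $\mathcal{G}=(\mathcal{V},\mathcal{E})$ be a directed graph on $\mathcal{V}=\{1,\ldots,n\}$ in which every node has at least one outgoing edge, with hyperlink matrix $A$, let $m\in(0,1)$, and let $x^*$ be the PageRank vector. Let $p_1,\ldots,p_n>0$ with $\sum_{i=1}^n p_i=1$. Consider the following randomized algorithm. Initially $x_i(0)=z_i(0)=m/n$ for all $i\in\mathcal{V}$. At each time $k\geq 0$, a page $\theta(k)\in\mathcal{V}$ is selected, the sequence $\{\theta(k)\}$ being i.i.d. with $\mathrm{Prob}\{\theta(k)=i\}=p_i$ for every $i\in\mathcal{V}$, and each page $i\in\mathcal{V}$ updates $$x_i(k+1)=\begin{cases}x_i(k)+\frac{1-m}{n_{\theta(k)}}z_{\theta(k)}(k)&\text{if } i\in\mathcal{L}^{\text{out}}_{\theta(k)},\\ x_i(k)&\text{otherwise,}\end{cases}$$ $$z_i(k+1)=\begin{cases}0&\text{if } i=\theta(k),\\ z_i(k)+\frac{1-m}{n_{\theta(k)}}z_{\theta(k)}(k)&\text{if } i\in\mathcal{L}^{\text{out}}_{\theta(k)},\\ z_i(k)&\text{otherwise.}\end{cases}$$ Then $x(k)\to x^*$ as $k\to\infty$ with probability $1$.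
   Context: Write $(i,j)\in\mathcal{E}$ if page $i$ has a link to page $j$. $\mathcal{L}_j^{\text{out}}=\{i:(j,i)\in\mathcal{E}\}$ and $n_j=|\mathcal{L}_j^{\text{out}}|\geq 1$. The hyperlink matrix $A=(a_{ij})$ is defined by $a_{ij}=1/n_j$ if $i\in\mathcal{L}_j^{\text{out}}$ and $a_{ij}=0$ otherwise (column stochastic). The PageRank vector $x^*$ satisfies $x^*=(1-m)Ax^*+\frac{m}{n}\mathbf{1}_n$ and $\mathbf{1}_n^Tx^*=1$. Here $x(k)=(x_1(k),\ldots,x_n(k))^T$. *)

theory Defs
  imports "HOL-Probability.Probability"
begin

text \<open>Pages are 0,...,n-1. E j i means page j has a link to page i.\<close>

definition out_links :: "(nat \<Rightarrow> nat \<Rightarrow> bool) \<Rightarrow> nat \<Rightarrow> nat \<Rightarrow> nat set" where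
  "out_links E n j = {i. i < n \<and> E j i}"

definition hyperlink :: "(nat \<Rightarrow> nat \<Rightarrow> bool) \<Rightarrow> nat \<Rightarrow> nat \<Rightarrow> nat \<Rightarrow> real" where
  "hyperlink E n i j = (if i \<in> out_links E n j then 1 / real (card (out_links E n j)) else 0)"

definition is_pagerank :: "(nat \<Rightarrow> nat \<Rightarrow> bool) \<Rightarrow> nat \<Rightarrow> real \<Rightarrow> (nat \<Rightarrow> real) \<Rightarrow> bool" where
  "is_pagerank E n m xs \<longleftrightarrow>
     (\<forall>i<n. xs i = (1 - m) * (\<Sum>j<n. hyperlink E n i j * xs j) + m / real n)
     \<and> (\<Sum>i<n. xs i) = 1"

fun pr_iter :: "(nat \<Rightarrow> nat \<Rightarrow> bool) \<Rightarrow> nat \<Rightarrow> real \<Rightarrow> (nat \<Rightarrow> nat) \<Rightarrow> nat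
      \<Rightarrow> (nat \<Rightarrow> real) \<times> (nat \<Rightarrow> real)" where
  "pr_iter E n m th 0 = ((\<lambda>i. m / real n), (\<lambda>i. m / real n))"
| "pr_iter E n m th (Suc k) =
     (let (x, z) = pr_iter E n m th k;
          t = th k;
          L = out_links E n t;
          inc = (1 - m) / real (card L) * z t
      in ((\<lambda>i. if i \<in> L then x i + inc else x i),
          (\<lambda>i. if i = t then 0 else if i \<in> L then z i + inc else z i)))"

end

theory Submission
  imports Defs
begin

lemma pr_fst_Suc:
  "fst (pr_iter E n m th (Suc k)) i =
     (if i \<in> out_links E n (th k)
      then fst (pr_iter E n m th k) i + (1 - m) / real (card (out_links E n (th k))) * snd (pr_iter E n m th k) (th k)
      else fst (pr_iter E n m th k) i)"
  by (simp add: Let_def split: prod.split)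

lemma pr_snd_Suc:
  "snd (pr_iter E n m th (Suc k)) i =
     (if i = th k then 0 else if i \<in> out_links E n (th k)
      then snd (pr_iter E n m th k) i + (1 - m) / real (card (out_links E n (th k))) * snd (pr_iter E n m th k) (th k)
      else snd (pr_iter E n m th k) i)"
  by (simp add: Let_def split: prod.split)

declare pr_iter.simps(2)[simp del]

lemma pr_iter_cong:
  "(\<And>j. j < k \<Longrightarrow> th j = th' j) \<Longrightarrow> pr_iter E n m th k = pr_iter E n m th' k"
proof (induction k)
  case 0 then show ?case by simp
next
  case (Suc k)
  then have "pr_iter E n m th k = pr_iter E n m th' k" by simp
  moreover have "th k = th' k" using Suc by simp
  ultimately show ?case by (simp add: Let_def pr_iter.simps(2))
qed

lemma z_nonneg:
  assumes "0 \<le> m" "m \<le> 1"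
  shows "0 \<le> snd (pr_iter E n m th k) i"
proof (induction k arbitrary: i)
  case 0 then show ?case using assms by simp
next
  case (Suc k)
  have "0 \<le> (1 - m) / real (card (out_links E n (th k))) * snd (pr_iter E n m th k) (th k)"
    using Suc assms by simp
  then show ?case using Suc by (simp add: pr_snd_Suc)
qed

lemma out_links_sub: "out_links E n j \<subseteq> {..<n}"
  by (auto simp: out_links_def)

lemma finite_out_links: "finite (out_links E n j)"
  by (rule finite_subset[OF out_links_sub]) simp

lemma sum_indic:
  "(\<Sum>i<n. if i \<in> out_links E n t then c else 0) = real (card (out_links E n t)) * (c::real)"
proof -
  have "(\<Sum>i<n. if i \<in> out_links E n t then c else 0) = (\<Sum>i\<in>out_links E n t. c)"
    using out_links_sub[of E n t] by (simp add: sum.If_cases Int_absorb1 Int_commute)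
  then show ?thesis by simp
qed

lemma col_stoch:
  assumes "out_links E n j \<noteq> {}"
  shows "(\<Sum>i<n. hyperlink E n i j) = 1"
proof -
  have "card (out_links E n j) > 0" using assms finite_out_links by (simp add: card_gt_0_iff)
  then show ?thesis unfolding hyperlink_def using sum_indic[where c="1 / real (card (out_links E n j))"]
    by simp
qed

lemma S_step:
  assumes t: "th k < n" and nl: "th k \<notin> out_links E n (th k)" and ne: "out_links E n (th k) \<noteq> {}"
  shows "(\<Sum>i<n. snd (pr_iter E n m th (Suc k)) i) =
         (\<Sum>i<n. snd (pr_iter E n m th k) i) - m * snd (pr_iter E n m th k) (th k)"
proof -
  let ?L = "out_links E n (th k)"
  let ?z = "snd (pr_iter E n m th k)"
  let ?inc = "(1 - m) / real (card ?L) * ?z (th k)"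
  have cp: "card ?L > 0" using ne finite_out_links by (simp add: card_gt_0_iff)
  have eq: "\<And>i. snd (pr_iter E n m th (Suc k)) i = ?z i - (if i = th k then ?z (th k) else 0) + (if i \<in> ?L then ?inc else 0)"
    using nl by (auto simp: pr_snd_Suc)
  have "(\<Sum>i<n. snd (pr_iter E n m th (Suc k)) i) =
        (\<Sum>i<n. ?z i) - (\<Sum>i<n. (if i = th k then ?z (th k) else 0)) + (\<Sum>i<n. (if i \<in> ?L then ?inc else 0))"
    by (simp only: eq sum.distrib sum_subtractf)
  also have "\<dots> = (\<Sum>i<n. ?z i) - ?z (th k) + real (card ?L) * ?inc"
    using t by (simp add: sum_indic)
  also have "real (card ?L) * ?inc = (1 - m) * ?z (th k)" using cp by simp
  finally show ?thesis by (simp add: algebra_simps)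
qed

lemma invariant:
  assumes th: "\<forall>k. th k < n" and nsl: "\<forall>i<n. \<not> E i i"
  assumes i: "i < n"
  shows "fst (pr_iter E n m th k) i - (1 - m) * (\<Sum>j<n. hyperlink E n i j * fst (pr_iter E n m th k) j)
         + (1 - m) * (\<Sum>j<n. hyperlink E n i j * snd (pr_iter E n m th k) j) = m / real n"
proof (induction k)
  case 0 then show ?case by (simp add: algebra_simps)
next
  case (Suc k)
  let ?t = "th k"
  let ?L = "out_links E n ?t"
  let ?x = "fst (pr_iter E n m th k)"
  let ?z = "snd (pr_iter E n m th k)"
  let ?inc = "(1 - m) / real (card ?L) * ?z ?t"
  define a where "a j = (if j \<in> ?L then ?inc else 0)" for j
  define d where "d j = (if j = ?t then ?z ?t else 0)" for j
  define h where "h j = hyperlink E n i j" for j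
  have nl: "?t \<notin> ?L" using th nsl by (simp add: out_links_def)
  have ex: "fst (pr_iter E n m th (Suc k)) = (\<lambda>j. ?x j + a j)"
    by (auto simp: pr_fst_Suc a_def)
  have ez: "snd (pr_iter E n m th (Suc k)) = (\<lambda>j. ?z j - d j + a j)"
    using nl by (auto simp: pr_snd_Suc a_def d_def)
  have s1: "(\<Sum>j<n. h j * (?x j + a j)) = (\<Sum>j<n. h j * ?x j) + (\<Sum>j<n. h j * a j)"
    by (simp add: algebra_simps sum.distrib)
  have s2: "(\<Sum>j<n. h j * (?z j - d j + a j)) = (\<Sum>j<n. h j * ?z j) - (\<Sum>j<n. h j * d j) + (\<Sum>j<n. h j * a j)"
    by (simp add: algebra_simps sum.distrib sum_subtractf)
  have s3: "(\<Sum>j<n. h j * d j) = h ?t * ?z ?t"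
    using th by (simp add: d_def if_distrib cong: if_cong)
  have ai: "a i = (1 - m) * h ?t * ?z ?t"
    by (simp add: a_def h_def hyperlink_def)
  show ?case
    unfolding ex ez h_def[symmetric] s1 s2 s3 using Suc.IH unfolding h_def[symmetric] ai
    by (simp add: algebra_simps)
qed

lemma err_bound:
  fixes x z xstar :: "nat \<Rightarrow> real"
  assumes pr: "is_pagerank E n m xstar" and outg: "\<forall>j<n. out_links E n j \<noteq> {}"
    and m: "0 < m" "m < 1"
    and inv: "\<And>i. i < n \<Longrightarrow> x i - (1 - m) * (\<Sum>j<n. hyperlink E n i j * x j)
         + (1 - m) * (\<Sum>j<n. hyperlink E n i j * z j) = m / real n"
    and zn: "\<And>i. 0 \<le> z i"
  shows "m * (\<Sum>i<n. \<bar>xstar i - x i\<bar>) \<le> (1 - m) * (\<Sum>i<n. z i)"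
proof -
  define e where "e i = xstar i - x i" for i
  define h where "h i j = hyperlink E n i j" for i j
  have hn: "0 \<le> h i j" for i j by (simp add: h_def hyperlink_def)
  have ps: "xstar i = (1 - m) * (\<Sum>j<n. h i j * xstar j) + m / real n" if "i < n" for i
    using pr that by (simp add: is_pagerank_def h_def)
  have ee: "e i = (1 - m) * (\<Sum>j<n. h i j * (e j + z j))" if "i < n" for i
  proof -
    have "e i = (1 - m) * ((\<Sum>j<n. h i j * xstar j) - (\<Sum>j<n. h i j * x j) + (\<Sum>j<n. h i j * z j))"
      using ps[OF that] inv[OF that] unfolding e_def h_def by (simp add: algebra_simps)
    also have "\<dots> = (1 - m) * (\<Sum>j<n. h i j * (e j + z j))"
      by (simp add: e_def algebra_simps sum.distrib sum_subtractf)
    finally show ?thesis .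
  qed
  have ae: "\<bar>e i\<bar> \<le> (1 - m) * (\<Sum>j<n. h i j * (\<bar>e j\<bar> + z j))" if "i < n" for i
  proof -
    have "\<bar>e i\<bar> = (1 - m) * \<bar>\<Sum>j<n. h i j * (e j + z j)\<bar>"
      using ee[OF that] m by (simp add: abs_mult)
    also have "\<bar>\<Sum>j<n. h i j * (e j + z j)\<bar> \<le> (\<Sum>j<n. \<bar>h i j * (e j + z j)\<bar>)"
      by (rule sum_abs)
    also have "\<dots> \<le> (\<Sum>j<n. h i j * (\<bar>e j\<bar> + z j))"
    proof (rule sum_mono)
      fix j
      have "\<bar>e j + z j\<bar> \<le> \<bar>e j\<bar> + z j" using zn[of j] by linarith
      then show "\<bar>h i j * (e j + z j)\<bar> \<le> h i j * (\<bar>e j\<bar> + z j)"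
        using hn[of i j] by (simp add: abs_mult mult_left_mono)
    qed
    finally show ?thesis using m by (simp add: mult_left_mono)
  qed
  have "(\<Sum>i<n. \<bar>e i\<bar>) \<le> (\<Sum>i<n. (1 - m) * (\<Sum>j<n. h i j * (\<bar>e j\<bar> + z j)))"
    by (rule sum_mono) (simp add: ae)
  also have "\<dots> = (1 - m) * (\<Sum>j<n. (\<Sum>i<n. h i j) * (\<bar>e j\<bar> + z j))"
  proof -
    have "(\<Sum>i<n. (1 - m) * (\<Sum>j<n. h i j * (\<bar>e j\<bar> + z j))) = (1 - m) * (\<Sum>i<n. \<Sum>j<n. h i j * (\<bar>e j\<bar> + z j))"
      by (simp only: sum_distrib_left)
    also have "(\<Sum>i<n. \<Sum>j<n. h i j * (\<bar>e j\<bar> + z j)) = (\<Sum>j<n. \<Sum>i<n. h i j * (\<bar>e j\<bar> + z j))"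
      by (rule sum.swap)
    also have "\<dots> = (\<Sum>j<n. (\<Sum>i<n. h i j) * (\<bar>e j\<bar> + z j))"
      by (simp only: sum_distrib_right)
    finally show ?thesis .
  qed
  also have "\<dots> = (1 - m) * (\<Sum>j<n. (\<bar>e j\<bar> + z j))"
    using outg by (simp add: h_def col_stoch)
  finally have "(\<Sum>i<n. \<bar>e i\<bar>) \<le> (1 - m) * ((\<Sum>j<n. \<bar>e j\<bar>) + (\<Sum>j<n. z j))"
    by (simp add: sum.distrib)
  then show ?thesis unfolding e_def by (simp add: algebra_simps)
qed

lemma S_le:
  assumes th: "\<forall>k. th k < n" and nsl: "\<forall>i<n. \<not> E i i"
    and outg: "\<forall>j<n. out_links E n j \<noteq> {}" and m: "0 < m" "m < 1" and n0: "n > 0"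
  shows "(\<Sum>i<n. snd (pr_iter E n m th k) i) \<le> m"
proof (induction k)
  case 0 then show ?case using n0 by simp
next
  case (Suc k)
  have nl: "th k \<notin> out_links E n (th k)" using th nsl by (simp add: out_links_def)
  have "0 \<le> snd (pr_iter E n m th k) (th k)" using z_nonneg m by simp
  then have "0 \<le> m * snd (pr_iter E n m th k) (th k)" using m by simp
  then show ?case using S_step[of th k n E m] th nl outg Suc m
    by simp
qed

lemma S_dec:
  assumes th: "\<forall>k. th k < n" and nsl: "\<forall>i<n. \<not> E i i"
    and outg: "\<forall>j<n. out_links E n j \<noteq> {}" and m: "0 < m" "m < 1"
  shows "(\<Sum>i<n. snd (pr_iter E n m th (Suc k)) i) \<le> (\<Sum>i<n. snd (pr_iter E n m th k) i)"
proof -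
  have nl: "th k \<notin> out_links E n (th k)" using th nsl by (simp add: out_links_def)
  have "0 \<le> snd (pr_iter E n m th k) (th k)" using z_nonneg m by simp
  then have "0 \<le> m * snd (pr_iter E n m th k) (th k)" using m by simp
  then show ?thesis using S_step[of th k n E m] th nl outg m
    by simp
qed

lemma det_conv:
  assumes th: "\<forall>k. th k < n" and nsl: "\<forall>i<n. \<not> E i i"
    and outg: "\<forall>j<n. out_links E n j \<noteq> {}" and m: "0 < m" "m < 1"
    and pr: "is_pagerank E n m xstar"
    and S: "(\<lambda>k. \<Sum>i<n. snd (pr_iter E n m th k) i) \<longlonglongrightarrow> 0"
    and i: "i < n"
  shows "(\<lambda>k. fst (pr_iter E n m th k) i) \<longlonglongrightarrow> xstar i"
proof -
  let ?S = "\<lambda>k. \<Sum>i<n. snd (pr_iter E n m th k) i"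
  let ?c = "(1 - m) / m"
  have b: "\<bar>xstar i - fst (pr_iter E n m th k) i\<bar> \<le> ?c * ?S k" for k
  proof -
    have "m * (\<Sum>i<n. \<bar>xstar i - fst (pr_iter E n m th k) i\<bar>) \<le> (1 - m) * ?S k"
      by (rule err_bound[OF pr outg m]) (use invariant[where th=th and n=n and E=E, OF th nsl] z_nonneg m in auto)
    moreover have "\<bar>xstar i - fst (pr_iter E n m th k) i\<bar> \<le> (\<Sum>i<n. \<bar>xstar i - fst (pr_iter E n m th k) i\<bar>)"
      using i by (intro member_le_sum) auto
    ultimately have "m * \<bar>xstar i - fst (pr_iter E n m th k) i\<bar> \<le> (1 - m) * ?S k"
      using m by (meson less_le mult_left_mono order_trans)
    then show ?thesis using m by (simp add: field_simps)
  qed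
  have l: "(\<lambda>k. xstar i - ?c * ?S k) \<longlonglongrightarrow> xstar i"
    using tendsto_diff[OF tendsto_const tendsto_mult[OF tendsto_const S]] by (simp only: mult_zero_right diff_zero)
  have u: "(\<lambda>k. xstar i + ?c * ?S k) \<longlonglongrightarrow> xstar i"
    using tendsto_add[OF tendsto_const tendsto_mult[OF tendsto_const S]] by (simp only: mult_zero_right add_0_right)
  show ?thesis
    by (rule tendsto_sandwich[OF _ _ l u]) (use b in \<open>auto simp: abs_le_iff algebra_simps\<close>)
qed

theorem proposition1:
  fixes E :: "nat \<Rightarrow> nat \<Rightarrow> bool" and n :: nat and m :: real
    and xstar :: "nat \<Rightarrow> real" and p :: "nat \<Rightarrow> real"
    and M :: "'a measure" and theta :: "nat \<Rightarrow> 'a \<Rightarrow> nat"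
  assumes n2: "n \<ge> 2"
    and no_selfloop: "\<forall>i<n. \<not> E i i"
    and outgoing: "\<forall>j<n. out_links E n j \<noteq> {}"
    and m: "0 < m" "m < 1"
    and pr: "is_pagerank E n m xstar"
    and ppos: "\<forall>i<n. p i > 0" and psum: "(\<Sum>i<n. p i) = 1"
    and P: "prob_space M"
    and rv: "\<forall>k. theta k \<in> measurable M (count_space UNIV)"
    and indep: "prob_space.indep_vars M (\<lambda>_. count_space UNIV) theta UNIV"
    and distr: "\<forall>k. \<forall>i<n. measure M {\<omega> \<in> space M. theta k \<omega> = i} = p i"
  shows "AE \<omega> in M. \<forall>i<n.
           (\<lambda>k. fst (pr_iter E n m (\<lambda>k. theta k \<omega>) k) i) \<longlonglongrightarrow> xstar i"
proof -
  interpret prob_space M by (rule P)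
  have n0: "n > 0" using n2 by simp
  define cl where "cl j = (if j < n then j else 0)" for j
  define th' where "th' k \<omega> = cl (theta k \<omega>)" for k \<omega>
  define Z where "Z k i \<omega> = snd (pr_iter E n m (\<lambda>j. th' j \<omega>) k) i" for k i \<omega>
  define S where "S k \<omega> = (\<Sum>i<n. Z k i \<omega>)" for k \<omega>
  have thn: "\<forall>k. th' k \<omega> < n" for \<omega> using n0 by (simp add: th'_def cl_def)
  have Znn: "0 \<le> Z k i \<omega>" for k i \<omega> unfolding Z_def using z_nonneg m by simp
  have Sle: "S k \<omega> \<le> m" for k \<omega>
    unfolding S_def Z_def by (rule S_le[OF thn no_selfloop outgoing m n0])
  have S0: "S 0 \<omega> = m" for \<omega> using n0 by (simp add: S_def Z_def)
  have Sstep: "S (Suc k) \<omega> = S k \<omega> - m * Z k (th' k \<omega>) \<omega>" for k \<omega>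
    unfolding S_def Z_def
    by (rule S_step) (use thn no_selfloop outgoing in \<open>auto simp: out_links_def\<close>)
  have Zle: "Z k i \<omega> \<le> m" if "i < n" for k i \<omega>
  proof -
    have "Z k i \<omega> \<le> S k \<omega>" unfolding S_def using that Znn by (intro member_le_sum) auto
    then show ?thesis using Sle[of k \<omega>] by simp
  qed
  have cl_meas: "cl \<in> measurable (count_space UNIV) (count_space UNIV)" by simp
  have th'_meas: "th' k \<in> measurable M (count_space UNIV)" for k
    unfolding th'_def using measurable_compose[OF rv[rule_format] cl_meas] by (simp add: comp_def)
  define R where "R k \<omega> = restrict (\<lambda>j. theta j \<omega>) {..<k}" for k \<omega>
  define G where "G k i f = snd (pr_iter E n m (\<lambda>j. cl (f j)) k) i" for k i f
  have ZG: "Z k i \<omega> = G k i (R k \<omega>)" for k i \<omega>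
  proof -
    have "pr_iter E n m (\<lambda>j. th' j \<omega>) k = pr_iter E n m (\<lambda>j. cl (R k \<omega> j)) k"
      by (rule pr_iter_cong) (simp add: R_def th'_def)
    then show ?thesis unfolding Z_def G_def by simp
  qed
  have PiC: "PiM A (\<lambda>_. count_space (UNIV::nat set)) = count_space (PiE A (\<lambda>_. UNIV))" if "finite A" for A :: "nat set"
    using that by (intro count_space_PiM_finite) auto
  have R_meas: "R k \<in> measurable M (PiM {..<k} (\<lambda>_. count_space UNIV))" for k
    unfolding R_def using rv by (intro measurable_restrict) auto
  have Z_meas: "(\<lambda>\<omega>. Z k i \<omega>) \<in> borel_measurable M" for k i
  proof -
    have "G k i \<in> measurable (PiM {..<k} (\<lambda>_. count_space UNIV)) borel"
      by (simp add: PiC)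
    then show ?thesis unfolding ZG using R_meas by (rule measurable_compose[rotated])
  qed
  have Z_int: "integrable M (\<lambda>\<omega>. Z k i \<omega>)" if "i < n" for k i
    by (rule integrable_const_bound[where B=m]) (use Z_meas Znn Zle[OF that] in auto)
  have Aset: "{\<omega>. th' k \<omega> = i} \<inter> space M \<in> sets M" for k i
  proof -
    have "th' k -` {i} \<inter> space M \<in> sets M" by (rule measurable_sets[OF th'_meas]) simp
    moreover have "th' k -` {i} = {\<omega>. th' k \<omega> = i}" by auto
    ultimately show ?thesis by simp
  qed
  have Ind_meas: "(indicator {\<omega>. th' k \<omega> = i} :: 'a \<Rightarrow> real) \<in> borel_measurable M" for k i
    using Aset by (simp add: borel_measurable_indicator_iff)
  have Ind_int: "integrable M (indicator {\<omega>. th' k \<omega> = i} :: 'a \<Rightarrow> real)" for k i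
    by (rule integrable_const_bound[where B=1]) (use Ind_meas in auto)
  have Ind_ge: "p i \<le> (\<integral>\<omega>. (indicator {\<omega>. th' k \<omega> = i} \<omega> :: real) \<partial>M)" if "i < n" for k i
  proof -
    have "p i = measure M {\<omega> \<in> space M. theta k \<omega> = i}" using distr that by simp
    also have "\<dots> \<le> measure M ({\<omega>. th' k \<omega> = i} \<inter> space M)"
      by (rule finite_measure_mono) (use Aset that in \<open>auto simp: th'_def cl_def\<close>)
    finally show ?thesis by simp
  qed
  have Zind: "indep_var borel (\<lambda>\<omega>. Z k i \<omega>) borel (indicator {\<omega>. th' k \<omega> = i} :: 'a \<Rightarrow> real)" for k i
  proof -
    have iv: "indep_var (PiM {..<k} (\<lambda>_. count_space UNIV)) (\<lambda>\<omega>. restrict (\<lambda>j. theta j \<omega>) {..<k})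
       (PiM {k} (\<lambda>_. count_space UNIV)) (\<lambda>\<omega>. restrict (\<lambda>j. theta j \<omega>) {k})"
      by (rule indep_var_restrict[OF indep]) auto
    define Y2 where "Y2 f = (if cl (f k) = i then 1 else 0 :: real)" for f :: "nat \<Rightarrow> nat"
    have m1: "G k i \<in> measurable (PiM {..<k} (\<lambda>_. count_space UNIV)) borel"
      by (simp add: PiC)
    have m2: "Y2 \<in> measurable (PiM {k} (\<lambda>_. count_space UNIV)) borel"
      by (simp add: PiC)
    have "indep_var borel (G k i \<circ> (\<lambda>\<omega>. restrict (\<lambda>j. theta j \<omega>) {..<k})) borel
        (Y2 \<circ> (\<lambda>\<omega>. restrict (\<lambda>j. theta j \<omega>) {k}))"
      by (rule indep_var_compose[OF iv m1 m2])
    moreover have "G k i \<circ> (\<lambda>\<omega>. restrict (\<lambda>j. theta j \<omega>) {..<k}) = (\<lambda>\<omega>. Z k i \<omega>)"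
      by (simp add: fun_eq_iff ZG R_def)
    moreover have "Y2 \<circ> (\<lambda>\<omega>. restrict (\<lambda>j. theta j \<omega>) {k}) = indicator {\<omega>. th' k \<omega> = i}"
      by (simp add: fun_eq_iff Y2_def th'_def indicator_def)
    ultimately show ?thesis by simp
  qed
  have Zth: "Z k (th' k \<omega>) \<omega> = (\<Sum>i<n. Z k i \<omega> * indicator {\<omega>. th' k \<omega> = i} \<omega>)" for k \<omega>
    using thn[of \<omega>] by (simp add: indicator_def)
  define q where "q = Min (p ` {..<n})"
  have q0: "q > 0" unfolding q_def using n0 ppos by (subst Min_gr_iff) auto
  have qle: "q \<le> p i" if "i < n" for i unfolding q_def using that by (intro Min_le) auto
  have q1: "q \<le> 1"
  proof -
    have "q \<le> p 0" using qle n0 by simp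
    also have "p 0 = measure M {\<omega> \<in> space M. theta 0 \<omega> = 0}" using distr n0 by simp
    also have "\<dots> \<le> 1" by (rule prob_le_1)
    finally show ?thesis .
  qed
  define c where "c = 1 - m * q"
  have c0: "0 \<le> c" unfolding c_def using m q1 q0
    by (metis diff_ge_0_iff_ge less_eq_real_def mult_le_one)
  have c1: "c < 1" unfolding c_def using m q0 by simp
  have S_meas: "(\<lambda>\<omega>. S k \<omega>) \<in> borel_measurable M" for k
    unfolding S_def using Z_meas by measurable
  have S_int: "integrable M (\<lambda>\<omega>. S k \<omega>)" for k
    unfolding S_def by (rule Bochner_Integration.integrable_sum) (simp add: Z_int)
  have ZI_int: "integrable M (\<lambda>\<omega>. Z k i \<omega> * indicator {\<omega>. th' k \<omega> = i} \<omega>)" if "i < n" for k i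
    by (rule indep_var_integrable[OF Zind Z_int[OF that] Ind_int])
  have ES: "(\<integral>\<omega>. S (Suc k) \<omega> \<partial>M) \<le> c * (\<integral>\<omega>. S k \<omega> \<partial>M)" for k
  proof -
    have "(\<integral>\<omega>. S (Suc k) \<omega> \<partial>M) = (\<integral>\<omega>. S k \<omega> - m * (\<Sum>i<n. Z k i \<omega> * indicator {\<omega>. th' k \<omega> = i} \<omega>) \<partial>M)"
      by (simp only: Sstep Zth)
    also have "\<dots> = (\<integral>\<omega>. S k \<omega> \<partial>M) - m * (\<Sum>i<n. (\<integral>\<omega>. Z k i \<omega> * indicator {\<omega>. th' k \<omega> = i} \<omega> \<partial>M))"
    proof -
      have i1: "integrable M (\<lambda>\<omega>. \<Sum>i<n. Z k i \<omega> * indicator {\<omega>. th' k \<omega> = i} \<omega>)"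
        by (rule Bochner_Integration.integrable_sum, rule ZI_int, simp)
      have "(\<integral>\<omega>. S k \<omega> - m * (\<Sum>i<n. Z k i \<omega> * indicator {\<omega>. th' k \<omega> = i} \<omega>) \<partial>M)
          = (\<integral>\<omega>. S k \<omega> \<partial>M) - (\<integral>\<omega>. m * (\<Sum>i<n. Z k i \<omega> * indicator {\<omega>. th' k \<omega> = i} \<omega>) \<partial>M)"
        by (rule Bochner_Integration.integral_diff[OF S_int integrable_mult_right[OF i1]])
      also have "(\<integral>\<omega>. m * (\<Sum>i<n. Z k i \<omega> * indicator {\<omega>. th' k \<omega> = i} \<omega>) \<partial>M)
          = m * (\<integral>\<omega>. (\<Sum>i<n. Z k i \<omega> * indicator {\<omega>. th' k \<omega> = i} \<omega>) \<partial>M)"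
        by (rule integral_mult_right_zero)
      also have "(\<integral>\<omega>. (\<Sum>i<n. Z k i \<omega> * indicator {\<omega>. th' k \<omega> = i} \<omega>) \<partial>M)
          = (\<Sum>i<n. (\<integral>\<omega>. Z k i \<omega> * indicator {\<omega>. th' k \<omega> = i} \<omega> \<partial>M))"
        by (rule Bochner_Integration.integral_sum, rule ZI_int, simp)
      finally show ?thesis .
    qed
    also have "\<dots> = (\<integral>\<omega>. S k \<omega> \<partial>M) - m * (\<Sum>i<n. (\<integral>\<omega>. Z k i \<omega> \<partial>M) * (\<integral>\<omega>. indicator {\<omega>. th' k \<omega> = i} \<omega> \<partial>M))"
      using Zind Z_int Ind_int by (simp add: indep_var_lebesgue_integral)
    also have "\<dots> \<le> (\<integral>\<omega>. S k \<omega> \<partial>M) - m * (\<Sum>i<n. (\<integral>\<omega>. Z k i \<omega> \<partial>M) * q)"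
    proof -
      have "(\<Sum>i<n. (\<integral>\<omega>. Z k i \<omega> \<partial>M) * q) \<le> (\<Sum>i<n. (\<integral>\<omega>. Z k i \<omega> \<partial>M) * (\<integral>\<omega>. indicator {\<omega>. th' k \<omega> = i} \<omega> \<partial>M))"
      proof (rule sum_mono)
        fix i assume "i \<in> {..<n}"
        then have "q \<le> (\<integral>\<omega>. indicator {\<omega>. th' k \<omega> = i} \<omega> \<partial>M)"
          using qle Ind_ge by (meson lessThan_iff order_trans)
        moreover have "0 \<le> (\<integral>\<omega>. Z k i \<omega> \<partial>M)" using Znn by (simp add: integral_nonneg)
        ultimately show "(\<integral>\<omega>. Z k i \<omega> \<partial>M) * q \<le> (\<integral>\<omega>. Z k i \<omega> \<partial>M) * (\<integral>\<omega>. indicator {\<omega>. th' k \<omega> = i} \<omega> \<partial>M)"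
          by (simp add: mult_left_mono)
      qed
      then show ?thesis using m by (simp add: mult_left_mono)
    qed
    also have "(\<Sum>i<n. (\<integral>\<omega>. Z k i \<omega> \<partial>M) * q) = q * (\<integral>\<omega>. S k \<omega> \<partial>M)"
      unfolding S_def using Z_int by (simp add: Bochner_Integration.integral_sum sum_distrib_left mult.commute)
    finally show ?thesis unfolding c_def by (simp add: algebra_simps)
  qed
  have ESk: "(\<integral>\<omega>. S k \<omega> \<partial>M) \<le> c ^ k * m" for k
  proof (induction k)
    case 0 then show ?case by (simp add: S0 prob_space)
  next
    case (Suc k)
    have "(\<integral>\<omega>. S (Suc k) \<omega> \<partial>M) \<le> c * (\<integral>\<omega>. S k \<omega> \<partial>M)" by (rule ES)
    also have "\<dots> \<le> c * (c ^ k * m)" using Suc c0 by (simp add: mult_left_mono)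
    finally show ?case by simp
  qed
  have Snn: "0 \<le> S k \<omega>" for k \<omega> unfolding S_def using Znn by (simp add: sum_nonneg)
  have AEeps: "AE \<omega> in M. \<exists>k. S k \<omega> < e" if e: "e > 0" for e
  proof -
    define B where "B = {\<omega> \<in> space M. \<forall>k. e \<le> S k \<omega>}"
    have Bs: "B \<in> sets M" unfolding B_def using S_meas by measurable
    have Bk: "measure M B \<le> c ^ k * m / e" for k
    proof -
      have "measure M B \<le> measure M {\<omega> \<in> space M. S k \<omega> \<ge> e}"
        by (rule finite_measure_mono) (use S_meas in \<open>auto simp: B_def\<close>)
      also have "\<dots> \<le> (\<integral>\<omega>. S k \<omega> \<partial>M) / e"
        by (rule integral_Markov_inequality_measure[OF S_int, where A="space M"]) (use Snn e in auto)
      also have "\<dots> \<le> c ^ k * m / e" using ESk[of k] e by (simp add: divide_right_mono)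
      finally show ?thesis .
    qed
    have lim: "(\<lambda>k. c ^ k * m / e) \<longlonglongrightarrow> 0 * m / e"
      by (intro tendsto_intros LIMSEQ_power_zero) (use c0 c1 e in auto)
    have "measure M B \<le> 0"
      using Bk lim by (intro LIMSEQ_le_const[where X="\<lambda>k. c ^ k * m / e"]) auto
    then have "measure M B = 0" by (simp add: measure_nonneg antisym)
    then have "emeasure M B = 0" using Bs by (simp add: emeasure_eq_measure)
    then show ?thesis
      by (subst AE_iff_measurable[OF Bs]) (auto simp: B_def not_less)
  qed
  have AES: "AE \<omega> in M. \<forall>j::nat. \<exists>k. S k \<omega> < 1 / real (Suc j)"
    by (subst AE_all_countable) (auto intro: AEeps)
  have AEn: "AE \<omega> in M. \<forall>k. theta k \<omega> < n"
  proof (subst AE_all_countable, intro allI)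
    fix k
    have "prob (\<Union>i\<in>{..<n}. {\<omega> \<in> space M. theta k \<omega> = i}) = (\<Sum>i<n. prob {\<omega> \<in> space M. theta k \<omega> = i})"
    proof (rule finite_measure_finite_Union)
      show "(\<lambda>i. {\<omega> \<in> space M. theta k \<omega> = i}) ` {..<n} \<subseteq> sets M"
      proof safe
        fix i
        have "theta k -` {i} \<inter> space M \<in> sets M" by (rule measurable_sets[OF rv[rule_format]]) simp
        moreover have "theta k -` {i} \<inter> space M = {\<omega> \<in> space M. theta k \<omega> = i}" by auto
        ultimately show "{\<omega> \<in> space M. theta k \<omega> = i} \<in> sets M" by simp
      qed
    qed (auto simp: disjoint_family_on_def)
    also have "\<dots> = 1" using distr psum by simp
    also have "(\<Union>i\<in>{..<n}. {\<omega> \<in> space M. theta k \<omega> = i}) = {\<omega> \<in> space M. theta k \<omega> < n}"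
      by auto
    ultimately have "prob {\<omega> \<in> space M. theta k \<omega> < n} = 1" by simp
    then have "AE \<omega> in M. \<omega> \<in> {\<omega> \<in> space M. theta k \<omega> < n}" by (rule AE_prob_1)
    then show "AE \<omega> in M. theta k \<omega> < n" by simp
  qed
  show ?thesis using AES AEn
  proof eventually_elim
    case (elim \<omega>)
    have eq: "(\<lambda>k. theta k \<omega>) = (\<lambda>k. th' k \<omega>)" using elim(2) by (auto simp: th'_def cl_def)
    have dec: "decseq (\<lambda>k. S k \<omega>)"
    proof (rule decseq_SucI)
      fix k
      have "0 \<le> m * Z k (th' k \<omega>) \<omega>" using m Znn by simp
      then show "S (Suc k) \<omega> \<le> S k \<omega>" by (simp add: Sstep)
    qed
    have Sconv: "(\<lambda>k. S k \<omega>) \<longlonglongrightarrow> 0"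
    proof (rule LIMSEQ_I)
      fix r :: real assume r: "0 < r"
      obtain j where j: "inverse (real (Suc j)) < r" using reals_Archimedean[OF r] by auto
      obtain k0 where k0: "S k0 \<omega> < 1 / real (Suc j)" using elim(1) by blast
      have "norm (S k \<omega> - 0) < r" if "k0 \<le> k" for k
      proof -
        have "S k \<omega> \<le> S k0 \<omega>" using decseqD[OF dec that] .
        then show ?thesis using Snn[of k \<omega>] k0 j by (simp add: inverse_eq_divide)
      qed
      then show "\<exists>no. \<forall>k\<ge>no. norm (S k \<omega> - 0) < r" by blast
    qed
    show ?case
    proof (intro allI impI)
      fix i assume i: "i < n"
      have "(\<lambda>k. fst (pr_iter E n m (\<lambda>j. th' j \<omega>) k) i) \<longlonglongrightarrow> xstar i"
        by (rule det_conv[OF thn no_selfloop outgoing m pr _ i]) (use Sconv in \<open>simp add: S_def Z_def\<close>)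
      then show "(\<lambda>k. fst (pr_iter E n m (\<lambda>k. theta k \<omega>) k) i) \<longlonglongrightarrow> xstar i" by (simp add: eq)
    qed
  qed
qed

end
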